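(* Let $S_0$ be the initial state of a $d$-dimensional Hegselmann–Krause system with social network $G=(V,E)$, $n=|V|$ agents and confidence bound $\varepsilon>0$, evolving under uniform random asynchronous updates, and let $\delta>0$. Then the expected convergence time to a $\delta$-stable state is $\operatorname{O}(\Phi(S_0)\, n|E|/\delta^2)$, and this is at most $\operatorname{O}\big(n|E|^2(\varepsilon/\delta)^2\big)$.
   Context: A $d$-dimensional Hegselmann–Krause system (HKS) consists of a finite undirected graph $G=(V,E)$ (the social network) whose $n=|V|$ nodes are agents, a confidence bound $\varepsilon>0$, and initial opinions (positions) $x_v(0)\in\mathbb{R}^d$ for $v\in V$. A state is an assignment of positions $x_v\in\mathbb{R}^d$ to the agents. In a state, the influencing neighborhood of $v$ is $N_v=\{u\in V:\{u,v\}\in E,\ \|x_u-x_v\|_2\le\varepsilon\}\cup\{v\}$. The influence network is the graph $(V,E_I)$ with $E_I=\{\{u,v\}\in E:\|x_u-x_v\|_2\le\varepsilon\}$, and the length of an edge $\{u,v\}$ is $\|x_u-x_v\|_2$. Uniform random asynchronous updates: at each step $t=0,1,2,\dots$ one agent $v$ is chosen uniformly at random (independently of the past) and its position becomes $x_v(t+1)=\frac{1}{|N_v(t)|}\sum_{u\in N_v(t)}x_u(t)$, while all other agents keep their positions. A state is $\delta$-stable if every edge of the influence network has length at most $\delta$. The convergence time is the number of steps until a $\delta$-stable state is reached for the first time. The potential of a state $S$ is $\Phi(S)=\sum_{\{u,v\}\in E}\min\{\|x_u-x_v\|_2^2,\varepsilon^2\}$. The constants in the $\operatorname{O}$-notation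 are absolute (independent of $G$, $d$, $\varepsilon$, $\delta$ and the initial state). *)

theory Defs
  imports "HOL-Probability.Probability"
begin

text \<open>Agents are the naturals 0..n-1; a position in R^d is a function nat => real
  of which only coordinates 0..d-1 matter; a state maps agents to positions.
  The social network is a set E of 2-element sets of agents.\<close>

definition edist :: "nat \<Rightarrow> (nat \<Rightarrow> real) \<Rightarrow> (nat \<Rightarrow> real) \<Rightarrow> real" where
  "edist d a b = sqrt (\<Sum>k<d. (a k - b k)^2)"

definition simple_graph :: "nat \<Rightarrow> nat set set \<Rightarrow> bool" where
  "simple_graph n E \<longleftrightarrow> E \<subseteq> {{u, v} | u v. u < n \<and> v < n \<and> u \<noteq> v}"

definition infl_nbhd :: "nat \<Rightarrow> nat set set \<Rightarrow> real \<Rightarrow> (nat \<Rightarrow> nat \<Rightarrow> real) \<Rightarrow> nat \<Rightarrow> nat set" where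
  "infl_nbhd d E \<epsilon> x v = {u. {u, v} \<in> E \<and> edist d (x u) (x v) \<le> \<epsilon>} \<union> {v}"

definition hk_update :: "nat \<Rightarrow> nat set set \<Rightarrow> real \<Rightarrow> (nat \<Rightarrow> nat \<Rightarrow> real) \<Rightarrow> nat \<Rightarrow> (nat \<Rightarrow> nat \<Rightarrow> real)" where
  "hk_update d E \<epsilon> x v =
     x(v := (\<lambda>k. (\<Sum>u\<in>infl_nbhd d E \<epsilon> x v. x u k) / real (card (infl_nbhd d E \<epsilon> x v))))"

primrec hk_traj :: "nat \<Rightarrow> nat set set \<Rightarrow> real \<Rightarrow> (nat \<Rightarrow> nat \<Rightarrow> real) \<Rightarrow> nat stream \<Rightarrow> nat \<Rightarrow> (nat \<Rightarrow> nat \<Rightarrow> real)" where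
  "hk_traj d E \<epsilon> x0 \<omega> 0 = x0"
| "hk_traj d E \<epsilon> x0 \<omega> (Suc t) = hk_update d E \<epsilon> (hk_traj d E \<epsilon> x0 \<omega> t) (\<omega> !! t)"

definition delta_stable :: "nat \<Rightarrow> nat set set \<Rightarrow> real \<Rightarrow> real \<Rightarrow> (nat \<Rightarrow> nat \<Rightarrow> real) \<Rightarrow> bool" where
  "delta_stable d E \<epsilon> \<delta> x \<longleftrightarrow>
     (\<forall>u v. {u, v} \<in> E \<and> edist d (x u) (x v) \<le> \<epsilon> \<longrightarrow> edist d (x u) (x v) \<le> \<delta>)"

definition conv_time :: "nat \<Rightarrow> nat set set \<Rightarrow> real \<Rightarrow> real \<Rightarrow> (nat \<Rightarrow> nat \<Rightarrow> real) \<Rightarrow> nat stream \<Rightarrow> ennreal" where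
  "conv_time d E \<epsilon> \<delta> x0 \<omega> =
     (if \<exists>t. delta_stable d E \<epsilon> \<delta> (hk_traj d E \<epsilon> x0 \<omega> t)
      then of_nat (LEAST t. delta_stable d E \<epsilon> \<delta> (hk_traj d E \<epsilon> x0 \<omega> t)) else \<infinity>)"

text \<open>Uniform random asynchronous updates: i.i.d. uniform choices of agents.\<close>
definition agent_choices :: "nat \<Rightarrow> nat stream measure" where
  "agent_choices n = stream_space (measure_pmf (pmf_of_set {..<n}))"

definition expected_conv_time :: "nat \<Rightarrow> nat \<Rightarrow> nat set set \<Rightarrow> real \<Rightarrow> real \<Rightarrow> (nat \<Rightarrow> nat \<Rightarrow> real) \<Rightarrow> ennreal" where
  "expected_conv_time n d E \<epsilon> \<delta> x0 = (\<integral>\<^sup>+ \<omega>. conv_time d E \<epsilon> \<delta> x0 \<omega> \<partial>agent_choices n)"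

text \<open>Length of an edge {u,v} (well defined since edist is symmetric).\<close>
definition edge_len :: "nat \<Rightarrow> (nat \<Rightarrow> nat \<Rightarrow> real) \<Rightarrow> nat set \<Rightarrow> real" where
  "edge_len d x e = (THE r. \<exists>u v. e = {u, v} \<and> r = edist d (x u) (x v))"

definition potential :: "nat \<Rightarrow> nat set set \<Rightarrow> real \<Rightarrow> (nat \<Rightarrow> nat \<Rightarrow> real) \<Rightarrow> real" where
  "potential d E \<epsilon> x = (\<Sum>e\<in>E. min ((edge_len d x e)^2) (\<epsilon>^2))"

end

theory Submission
  imports Defs
begin


definition sqd :: "nat \<Rightarrow> (nat \<Rightarrow> real) \<Rightarrow> (nat \<Rightarrow> real) \<Rightarrow> real" where
  "sqd d a b = (\<Sum>k<d. (a k - b k)^2)"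

definition mean :: "nat \<Rightarrow> nat set set \<Rightarrow> real \<Rightarrow> (nat \<Rightarrow> nat \<Rightarrow> real) \<Rightarrow> nat \<Rightarrow> nat \<Rightarrow> real" where
  "mean d E \<epsilon> x v = (\<lambda>k. (\<Sum>u\<in>infl_nbhd d E \<epsilon> x v. x u k) / real (card (infl_nbhd d E \<epsilon> x v)))"

lemma hk_update_mean: "hk_update d E \<epsilon> x v = x(v := mean d E \<epsilon> x v)"
  by (simp add: hk_update_def mean_def)

lemma sqd_nonneg: "sqd d a b \<ge> 0"
  by (simp add: sqd_def sum_nonneg)

lemma sqd_sym: "sqd d a b = sqd d b a"
  by (simp add: sqd_def power2_commute)

lemma sqd_self: "sqd d a a = 0"
  by (simp add: sqd_def)

lemma edist_sqd: "edist d a b = sqrt (sqd d a b)"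
  by (simp add: edist_def sqd_def)

lemma edist_sym: "edist d a b = edist d b a"
  by (simp add: edist_sqd sqd_sym)

lemma edist_sq: "(edist d a b)^2 = sqd d a b"
  by (simp add: edist_sqd sqd_nonneg)

lemma edist_le_iff: "\<epsilon> \<ge> 0 \<Longrightarrow> edist d a b \<le> \<epsilon> \<longleftrightarrow> sqd d a b \<le> \<epsilon>^2"
  using real_sqrt_le_iff[of "sqd d a b" "\<epsilon>^2"] by (simp add: edist_sqd)

lemma edge_len_pair: "edge_len d x {u, v} = edist d (x u) (x v)"
  unfolding edge_len_def
proof (rule the_equality)
  show "\<exists>u' v'. {u, v} = {u', v'} \<and> edist d (x u) (x v) = edist d (x u') (x v')" by blast
next
  fix r assume "\<exists>u' v'. {u, v} = {u', v'} \<and> r = edist d (x u') (x v')"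
  then obtain u' v' where "{u, v} = {u', v'}" "r = edist d (x u') (x v')" by blast
  then show "r = edist d (x u) (x v)"
    by (auto simp: doubleton_eq_iff edist_sym)
qed

lemma edge_len_sq: "(edge_len d x {u, v})^2 = sqd d (x u) (x v)"
  by (simp add: edge_len_pair edist_sq)

lemma mean_identity:
  assumes fin: "finite N" and ne: "N \<noteq> {}" and m: "\<And>k. m k = (\<Sum>u\<in>N. a u k) / real (card N)"
  shows "(\<Sum>u\<in>N. sqd d (a u) m - sqd d (a u) c) = - real (card N) * sqd d m c"
proof -
  have cpos: "real (card N) > 0" using fin ne by (simp add: card_gt_0_iff)
  have per: "(\<Sum>u\<in>N. (a u k - m k)^2 - (a u k - c k)^2) = - real (card N) * (m k - c k)^2" for k
  proof -
    have s: "(\<Sum>u\<in>N. a u k) = real (card N) * m k" using m[of k] cpos by simp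
    have "(\<Sum>u\<in>N. (a u k - m k)^2 - (a u k - c k)^2)
        = (\<Sum>u\<in>N. 2 * (c k - m k) * a u k - (c k - m k) * (m k + c k))"
      by (rule sum.cong) (auto simp: power2_eq_square algebra_simps)
    also have "\<dots> = 2 * (c k - m k) * (\<Sum>u\<in>N. a u k) - real (card N) * ((c k - m k) * (m k + c k))"
      by (simp add: sum_subtractf sum_distrib_left)
    also have "\<dots> = - real (card N) * (m k - c k)^2"
      unfolding s by (simp add: power2_eq_square algebra_simps)
    finally show ?thesis .
  qed
  have "(\<Sum>u\<in>N. sqd d (a u) m - sqd d (a u) c) = (\<Sum>u\<in>N. \<Sum>k<d. (a u k - m k)^2 - (a u k - c k)^2)"
    by (simp add: sqd_def sum_subtractf)
  also have "\<dots> = (\<Sum>k<d. \<Sum>u\<in>N. (a u k - m k)^2 - (a u k - c k)^2)"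
    by (rule sum.swap)
  also have "\<dots> = (\<Sum>k<d. - real (card N) * (m k - c k)^2)"
    by (simp add: per)
  also have "\<dots> = - real (card N) * sqd d m c"
    by (simp add: sqd_def sum_distrib_left)
  finally show ?thesis .
qed

lemma threshold:
  fixes f :: "nat \<Rightarrow> real" and A :: "nat \<Rightarrow> nat set"
  assumes V: "finite V" and AV: "\<And>w. w \<in> V \<Longrightarrow> A w \<subseteq> V"
    and sym: "\<And>w u. w \<in> V \<Longrightarrow> u \<in> V \<Longrightarrow> u \<in> A w \<longleftrightarrow> w \<in> A u"
    and u0: "u0 \<in> V" and v0: "v0 \<in> A u0" and lt: "f v0 < f u0"
  shows "f u0 - f v0 \<le> (\<Sum>w\<in>V. \<bar>\<Sum>u\<in>A w. f w - f u\<bar>)"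
proof -
  define S where "S = {w\<in>V. f u0 \<le> f w}"
  have SV: "S \<subseteq> V" by (auto simp: S_def)
  have Sfin: "finite S" using V SV finite_subset by blast
  have Afin: "w \<in> V \<Longrightarrow> finite (A w)" for w using AV V finite_subset by blast
  have zero: "(\<Sum>w\<in>S. \<Sum>u\<in>{u\<in>S. u \<in> A w}. f w - f u) = 0"
  proof -
    have "(\<Sum>w\<in>S. \<Sum>u\<in>{u\<in>S. u \<in> A w}. f u) = (\<Sum>u\<in>S. \<Sum>w\<in>{w\<in>S. u \<in> A w}. f u)"
      by (rule sum.swap_restrict[OF Sfin Sfin])
    also have "\<dots> = (\<Sum>u\<in>S. \<Sum>w\<in>{w\<in>S. w \<in> A u}. f u)"
      by (rule sum.cong[OF refl], rule sum.cong) (use SV sym in auto)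
    finally have "(\<Sum>w\<in>S. \<Sum>u\<in>{u\<in>S. u \<in> A w}. f u) = (\<Sum>w\<in>S. \<Sum>u\<in>{u\<in>S. u \<in> A w}. f w)" .
    then show ?thesis by (simp add: sum_subtractf)
  qed
  have dec: "(\<Sum>u\<in>A w. f w - f u) = (\<Sum>u\<in>{u\<in>S. u \<in> A w}. f w - f u) + (\<Sum>u\<in>A w - S. f w - f u)"
    if "w \<in> S" for w
  proof -
    have "{u\<in>S. u \<in> A w} = A w \<inter> S" by auto
    then show ?thesis using sum.Int_Diff[OF Afin, of w _ S] that SV by auto
  qed
  have pos: "f w - f u > 0" if "w \<in> S" "u \<in> A w - S" for w u
  proof -
    have "u \<in> V" using that AV SV by auto
    then have "f u < f u0" using that by (auto simp: S_def)
    then show ?thesis using that by (auto simp: S_def)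
  qed
  have posle: "0 \<le> f w - f u" if "w \<in> S" "u \<in> A w - S" for w u
    using pos[OF that] by simp
  have u0S: "u0 \<in> S" using u0 by (simp add: S_def)
  have v0S: "v0 \<in> A u0 - S" using v0 lt by (simp add: S_def)
  have "f u0 - f v0 \<le> (\<Sum>u\<in>A u0 - S. f u0 - f u)"
    by (rule member_le_sum[OF v0S]) (use pos u0S Afin u0 in \<open>auto intro: less_imp_le\<close>)
  also have "\<dots> \<le> (\<Sum>w\<in>S. \<Sum>u\<in>A w - S. f w - f u)"
    by (rule member_le_sum[OF u0S, where f = "\<lambda>w. \<Sum>u\<in>A w - S. f w - f u"])
       (use posle Sfin in \<open>auto intro!: sum_nonneg\<close>)
  also have "\<dots> = (\<Sum>w\<in>S. \<Sum>u\<in>A w. f w - f u)"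
    using zero by (simp add: dec sum.distrib)
  also have "\<dots> \<le> (\<Sum>w\<in>S. \<bar>\<Sum>u\<in>A w. f w - f u\<bar>)"
    by (rule sum_mono) simp
  also have "\<dots> \<le> (\<Sum>w\<in>V. \<bar>\<Sum>u\<in>A w. f w - f u\<bar>)"
    by (rule sum_mono2[OF V SV]) simp
  finally show ?thesis .
qed

lemma wcs:
  fixes a c :: "nat \<Rightarrow> real"
  assumes "\<And>w. w \<in> W \<Longrightarrow> a w > 0"
  shows "(\<Sum>w\<in>W. c w)^2 \<le> (\<Sum>w\<in>W. a w) * (\<Sum>w\<in>W. (c w)^2 / a w)"
proof -
  have "(\<Sum>w\<in>W. c w) = (\<Sum>w\<in>W. sqrt (a w) * (c w / sqrt (a w)))"
  proof (rule sum.cong)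
    fix w assume "w \<in> W"
    then have "sqrt (a w) \<noteq> 0" using assms by force
    then show "c w = sqrt (a w) * (c w / sqrt (a w))" by simp
  qed simp
  then have "(\<Sum>w\<in>W. c w)^2 \<le> (\<Sum>w\<in>W. (sqrt (a w))^2) * (\<Sum>w\<in>W. (c w / sqrt (a w))^2)"
    using Cauchy_Schwarz_ineq_sum[of "\<lambda>w. sqrt (a w)" "\<lambda>w. c w / sqrt (a w)" W] by simp
  also have "\<dots> = (\<Sum>w\<in>W. a w) * (\<Sum>w\<in>W. (c w)^2 / a w)"
    using assms by (simp add: power_divide less_imp_le)
  finally show ?thesis .
qed

context
  fixes n :: nat and E :: "nat set set"
  assumes sg: "simple_graph n E"
begin

lemma fin_E: "finite E"
proof -
  have "E \<subseteq> (\<lambda>(u, v). {u, v}) ` ({..<n} \<times> {..<n})"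
    using sg unfolding simple_graph_def by auto
  then show ?thesis by (rule finite_subset) auto
qed

lemma edgeD: "{u, v} \<in> E \<Longrightarrow> u < n \<and> v < n \<and> u \<noteq> v"
  using sg unfolding simple_graph_def by (auto simp: doubleton_eq_iff)

lemma edgeE: "e \<in> E \<Longrightarrow> \<exists>u v. e = {u, v} \<and> u < n \<and> v < n \<and> u \<noteq> v"
  using sg unfolding simple_graph_def by auto

lemma nb_sub: "v < n \<Longrightarrow> infl_nbhd d E \<epsilon> x v \<subseteq> {..<n}"
  unfolding infl_nbhd_def using edgeD by auto

lemma nb_fin: "finite (infl_nbhd d E \<epsilon> x v)"
proof -
  have "infl_nbhd d E \<epsilon> x v \<subseteq> insert v {..<n}"
    unfolding infl_nbhd_def using edgeD by auto
  then show ?thesis by (rule finite_subset) auto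
qed

lemma nb_self: "v \<in> infl_nbhd d E \<epsilon> x v"
  by (simp add: infl_nbhd_def)

lemma nb_card_pos: "card (infl_nbhd d E \<epsilon> x v) > 0"
  using nb_fin[of d \<epsilon> x v] nb_self[of v d \<epsilon> x] by (auto simp: card_gt_0_iff)

lemma drop:
  assumes e: "\<epsilon> > 0"
  shows "potential d E \<epsilon> (hk_update d E \<epsilon> x v)
     \<le> potential d E \<epsilon> x - real (card (infl_nbhd d E \<epsilon> x v)) * sqd d (mean d E \<epsilon> x v) (x v)"
proof -
  define N where "N = infl_nbhd d E \<epsilon> x v"
  define m where "m = mean d E \<epsilon> x v"
  define x' where "x' = hk_update d E \<epsilon> x v"
  have x'eq: "x' = x(v := m)" by (simp add: x'_def m_def hk_update_mean)
  define \<phi> where "\<phi> y e = min ((edge_len d y e)^2) (\<epsilon>^2)" for y e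
  define Av where "Av = {u. {u, v} \<in> E}"
  define E1 where "E1 = {e\<in>E. v \<in> e}"
  define E2 where "E2 = {e\<in>E. v \<notin> e}"
  have Av_ne: "u \<in> Av \<Longrightarrow> u \<noteq> v" for u using edgeD by (auto simp: Av_def)
  have Av_fin: "finite Av"
  proof -
    have "Av \<subseteq> {..<n}" using edgeD by (auto simp: Av_def)
    then show ?thesis by (rule finite_subset) auto
  qed
  have E1eq: "E1 = (\<lambda>u. {u, v}) ` Av"
  proof
    show "E1 \<subseteq> (\<lambda>u. {u, v}) ` Av"
    proof
      fix e assume "e \<in> E1"
      then have eE: "e \<in> E" and ve: "v \<in> e" by (auto simp: E1_def)
      obtain a b where ab: "e = {a, b}" using edgeE[OF eE] by blast
      show "e \<in> (\<lambda>u. {u, v}) ` Av"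
      proof (cases "a = v")
        case True
        then have "e = {b, v}" using ab by auto
        then show ?thesis using eE by (auto simp: Av_def)
      next
        case False
        then have "b = v" using ab ve by auto
        then show ?thesis using eE ab by (auto simp: Av_def)
      qed
    qed
  next
    show "(\<lambda>u. {u, v}) ` Av \<subseteq> E1" by (auto simp: Av_def E1_def)
  qed
  have inj: "inj_on (\<lambda>u. {u, v}) Av"
    by (rule inj_onI) (auto simp: doubleton_eq_iff)
  have split: "potential d E \<epsilon> y = (\<Sum>u\<in>Av. min (sqd d (y u) (y v)) (\<epsilon>^2)) + (\<Sum>e\<in>E2. \<phi> y e)" for y
  proof -
    have "E = E1 \<union> E2" "E1 \<inter> E2 = {}" by (auto simp: E1_def E2_def)
    moreover have "finite E1" "finite E2" using fin_E by (auto simp: E1_def E2_def)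
    ultimately have "potential d E \<epsilon> y = (\<Sum>e\<in>E1. \<phi> y e) + (\<Sum>e\<in>E2. \<phi> y e)"
      unfolding potential_def \<phi>_def by (metis sum.union_disjoint)
    also have "(\<Sum>e\<in>E1. \<phi> y e) = (\<Sum>u\<in>Av. \<phi> y {u, v})"
      unfolding E1eq by (simp add: sum.reindex[OF inj])
    also have "\<dots> = (\<Sum>u\<in>Av. min (sqd d (y u) (y v)) (\<epsilon>^2))"
      by (simp add: \<phi>_def edge_len_sq)
    finally show ?thesis .
  qed
  have E2same: "(\<Sum>e\<in>E2. \<phi> x' e) = (\<Sum>e\<in>E2. \<phi> x e)"
  proof (rule sum.cong)
    fix e assume "e \<in> E2"
    then have eE: "e \<in> E" and ve: "v \<notin> e" by (auto simp: E2_def)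
    obtain a b where ab: "e = {a, b}" using edgeE[OF eE] by blast
    have "a \<noteq> v" "b \<noteq> v" using ab ve by auto
    then show "\<phi> x' e = \<phi> x e" unfolding \<phi>_def ab edge_len_pair x'eq by simp
  qed simp
  define B where "B = N - {v}"
  have BAv: "B \<subseteq> Av" by (auto simp: B_def N_def infl_nbhd_def Av_def)
  have Bchar: "u \<in> Av - B \<Longrightarrow> \<not> edist d (x u) (x v) \<le> \<epsilon>" for u
    using Av_ne[of u] by (auto simp: B_def N_def infl_nbhd_def Av_def)
  have Bchar2: "u \<in> B \<Longrightarrow> edist d (x u) (x v) \<le> \<epsilon>" for u
    by (auto simp: B_def N_def infl_nbhd_def)
  have Nfin: "finite N" unfolding N_def by (rule nb_fin)
  have vN: "v \<in> N" unfolding N_def by (rule nb_self)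
  have Bfin: "finite B" using Nfin by (simp add: B_def)
  have x'u: "u \<in> Av \<Longrightarrow> x' u = x u" for u using Av_ne[of u] by (simp add: x'eq)
  have x'v: "x' v = m" by (simp add: x'eq)
  have part1: "(\<Sum>u\<in>Av - B. min (sqd d (x' u) (x' v)) (\<epsilon>^2)) \<le> (\<Sum>u\<in>Av - B. min (sqd d (x u) (x v)) (\<epsilon>^2))"
  proof (rule sum_mono)
    fix u assume u: "u \<in> Av - B"
    have "\<not> sqd d (x u) (x v) \<le> \<epsilon>^2" using Bchar[OF u] edist_le_iff[of \<epsilon>] e by simp
    then show "min (sqd d (x' u) (x' v)) (\<epsilon>^2) \<le> min (sqd d (x u) (x v)) (\<epsilon>^2)" by simp
  qed
  have part2a: "(\<Sum>u\<in>B. min (sqd d (x' u) (x' v)) (\<epsilon>^2)) \<le> (\<Sum>u\<in>B. sqd d (x u) m)"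
    by (rule sum_mono) (use BAv x'u x'v in auto)
  have part2b: "(\<Sum>u\<in>B. min (sqd d (x u) (x v)) (\<epsilon>^2)) = (\<Sum>u\<in>B. sqd d (x u) (x v))"
  proof (rule sum.cong)
    fix u assume "u \<in> B"
    then have "sqd d (x u) (x v) \<le> \<epsilon>^2" using Bchar2 edist_le_iff[of \<epsilon>] e by auto
    then show "min (sqd d (x u) (x v)) (\<epsilon>^2) = sqd d (x u) (x v)" by simp
  qed simp
  have mid: "(\<Sum>u\<in>N. sqd d (x u) m - sqd d (x u) (x v)) = - real (card N) * sqd d m (x v)"
    by (rule mean_identity[OF Nfin]) (use vN in \<open>auto simp: m_def mean_def N_def\<close>)
  have "(\<Sum>u\<in>N. sqd d (x u) m - sqd d (x u) (x v))
      = (sqd d (x v) m - sqd d (x v) (x v)) + (\<Sum>u\<in>B. sqd d (x u) m - sqd d (x u) (x v))"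
    unfolding B_def using Nfin vN by (rule sum.remove)
  then have part2c: "(\<Sum>u\<in>B. sqd d (x u) m) - (\<Sum>u\<in>B. sqd d (x u) (x v)) \<le> - real (card N) * sqd d m (x v)"
    using mid sqd_nonneg[of d "x v" m] by (simp add: sqd_self sum_subtractf)
  have "(\<Sum>u\<in>Av. min (sqd d (x' u) (x' v)) (\<epsilon>^2))
     = (\<Sum>u\<in>Av - B. min (sqd d (x' u) (x' v)) (\<epsilon>^2)) + (\<Sum>u\<in>B. min (sqd d (x' u) (x' v)) (\<epsilon>^2))"
    by (rule sum.subset_diff[OF BAv Av_fin])
  moreover have "(\<Sum>u\<in>Av. min (sqd d (x u) (x v)) (\<epsilon>^2))
     = (\<Sum>u\<in>Av - B. min (sqd d (x u) (x v)) (\<epsilon>^2)) + (\<Sum>u\<in>B. min (sqd d (x u) (x v)) (\<epsilon>^2))"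
    by (rule sum.subset_diff[OF BAv Av_fin])
  ultimately have "(\<Sum>u\<in>Av. min (sqd d (x' u) (x' v)) (\<epsilon>^2))
      \<le> (\<Sum>u\<in>Av. min (sqd d (x u) (x v)) (\<epsilon>^2)) - real (card N) * sqd d m (x v)"
    using part1 part2a part2b part2c by linarith
  then show ?thesis
    using split[of x'] split[of x] E2same by (simp add: x'_def N_def m_def)
qed

lemma deg_bound:
  "(\<Sum>w\<in>{w\<in>{..<n}. infl_nbhd d E \<epsilon> x w \<noteq> {w}}. card (infl_nbhd d E \<epsilon> x w)) \<le> 4 * card E"
proof -
  let ?N = "\<lambda>w. infl_nbhd d E \<epsilon> x w"
  let ?W = "{w\<in>{..<n}. ?N w \<noteq> {w}}"
  let ?deg = "\<lambda>w. card {e\<in>E. w \<in> e}"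
  have cN: "card (?N w) = card (?N w - {w}) + 1" for w
    using nb_fin[of d \<epsilon> x w] nb_self[of w d \<epsilon> x] nb_card_pos[of d \<epsilon> x w]
    by (simp add: card_Diff_singleton)
  have Adeg: "card (?N w - {w}) \<le> ?deg w" for w
  proof (rule card_inj_on_le[where f = "\<lambda>u. {u, w}"])
    show "inj_on (\<lambda>u. {u, w}) (?N w - {w})" by (rule inj_onI) (auto simp: doubleton_eq_iff)
    show "(\<lambda>u. {u, w}) ` (?N w - {w}) \<subseteq> {e\<in>E. w \<in> e}" by (auto simp: infl_nbhd_def)
    show "finite {e\<in>E. w \<in> e}" using fin_E by simp
  qed
  have step1: "card (?N w) \<le> 2 * ?deg w" if "w \<in> ?W" for w
  proof -
    have "?N w - {w} \<noteq> {}" using that nb_self[of w d \<epsilon> x] by auto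
    then have "card (?N w - {w}) \<ge> 1" using nb_fin[of d \<epsilon> x w]
      by (metis One_nat_def Suc_leI card_gt_0_iff finite_Diff)
    then show ?thesis using cN[of w] Adeg[of w] by linarith
  qed
  have degsum: "(\<Sum>w<n. ?deg w) \<le> 2 * card E"
  proof -
    have "(\<Sum>w<n. ?deg w) = (\<Sum>w<n. \<Sum>e\<in>E. if w \<in> e then 1 else 0)"
      using fin_E by (simp add: sum.inter_filter[symmetric])
    also have "\<dots> = (\<Sum>e\<in>E. \<Sum>w<n. if w \<in> e then 1 else 0)" by (rule sum.swap)
    also have "\<dots> = (\<Sum>e\<in>E. card {w\<in>{..<n}. w \<in> e})"
      by (simp add: sum.inter_filter[symmetric])
    also have "\<dots> \<le> (\<Sum>e\<in>E. 2)"
    proof (rule sum_mono)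
      fix e assume "e \<in> E"
      then obtain a b where ab: "e = {a, b}" "a \<noteq> b" using edgeE by blast
      have "card {w\<in>{..<n}. w \<in> e} \<le> card e" by (rule card_mono) (auto simp: ab)
      then show "card {w\<in>{..<n}. w \<in> e} \<le> 2" using ab by simp
    qed
    finally show ?thesis by simp
  qed
  have "(\<Sum>w\<in>?W. card (?N w)) \<le> (\<Sum>w\<in>?W. 2 * ?deg w)" by (rule sum_mono) (rule step1)
  also have "\<dots> \<le> (\<Sum>w<n. 2 * ?deg w)" by (rule sum_mono2) auto
  also have "\<dots> = 2 * (\<Sum>w<n. ?deg w)" by (simp add: sum_distrib_left)
  also have "\<dots> \<le> 4 * card E" using degsum by simp
  finally show ?thesis .
qed

lemma key:
  assumes e: "\<epsilon> > 0" and dl: "\<delta> > 0" and ns: "\<not> delta_stable d E \<epsilon> \<delta> x"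
  shows "card E > 0 \<and> \<delta>^2 \<le> 4 * real (card E) *
           (\<Sum>w<n. real (card (infl_nbhd d E \<epsilon> x w)) * sqd d (mean d E \<epsilon> x w) (x w))"
proof -
  let ?N = "\<lambda>w. infl_nbhd d E \<epsilon> x w"
  let ?W = "{w\<in>{..<n}. ?N w \<noteq> {w}}"
  define Ssum where "Ssum = (\<Sum>w<n. real (card (?N w)) * sqd d (mean d E \<epsilon> x w) (x w))"
  obtain u0 v0 where E0: "{u0, v0} \<in> E" and le: "edist d (x u0) (x v0) \<le> \<epsilon>"
    and gt: "\<not> edist d (x u0) (x v0) \<le> \<delta>"
    using ns unfolding delta_stable_def by blast
  have cE: "card E > 0" using E0 fin_E by (auto simp: card_gt_0_iff)
  define D2 where "D2 = sqd d (x u0) (x v0)"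
  have "\<delta> < sqrt D2" using gt by (simp add: D2_def edist_sqd)
  then have dD: "\<delta>^2 < D2"
    using dl power_strict_mono[of \<delta> "sqrt D2" 2] by (simp add: D2_def sqd_nonneg)
  have D2pos: "D2 > 0" using dD dl by (smt (verit) zero_less_power)
  define ek where "ek k = x u0 k - x v0 k" for k
  define f where "f w = (\<Sum>k<d. x w k * ek k)" for w
  have fdiff: "f u0 - f v0 = D2"
    unfolding f_def D2_def sqd_def sum_subtractf[symmetric]
    by (rule sum.cong) (auto simp: ek_def power2_eq_square algebra_simps)
  define A where "A w = ?N w - {w}" for w
  define G where "G w = (\<Sum>u\<in>A w. f w - f u)" for w
  have thr: "f u0 - f v0 \<le> (\<Sum>w\<in>{..<n}. \<bar>G w\<bar>)"
    unfolding G_def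
  proof (rule threshold)
    show "finite {..<n}" by simp
    show "A w \<subseteq> {..<n}" if "w \<in> {..<n}" for w using nb_sub[of w d \<epsilon> x] that by (auto simp: A_def)
    show "u \<in> A w \<longleftrightarrow> w \<in> A u" for w u
      by (auto simp: A_def infl_nbhd_def insert_commute edist_sym)
    show "u0 \<in> {..<n}" using edgeD[OF E0] by simp
    show "v0 \<in> A u0" using E0 le edgeD[OF E0]
      by (auto simp: A_def infl_nbhd_def insert_commute edist_sym)
    show "f v0 < f u0" using fdiff D2pos by simp
  qed
  have Gform: "G w = (\<Sum>k<d. (real (card (?N w)) * (x w k - mean d E \<epsilon> x w k)) * ek k)" for w
  proof -
    have fin: "finite (?N w)" by (rule nb_fin)
    have c0: "real (card (?N w)) > 0" using nb_card_pos[of d \<epsilon> x w] by simp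
    have "G w = (f w - f w) + (\<Sum>u\<in>?N w - {w}. f w - f u)" by (simp add: G_def A_def)
    also have "\<dots> = (\<Sum>u\<in>?N w. f w - f u)"
      by (rule sum.remove[symmetric]) (simp_all add: fin nb_self)
    also have "\<dots> = (\<Sum>u\<in>?N w. \<Sum>k<d. (x w k - x u k) * ek k)"
      by (simp add: f_def sum_subtractf[symmetric] left_diff_distrib)
    also have "\<dots> = (\<Sum>k<d. (\<Sum>u\<in>?N w. x w k - x u k) * ek k)"
      by (subst sum.swap) (simp add: sum_distrib_right)
    also have "\<dots> = (\<Sum>k<d. (real (card (?N w)) * (x w k - mean d E \<epsilon> x w k)) * ek k)"
    proof (rule sum.cong[OF refl])
      fix k
      have "(\<Sum>u\<in>?N w. x w k - x u k) = real (card (?N w)) * x w k - (\<Sum>u\<in>?N w. x u k)"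
        by (simp add: sum_subtractf)
      also have "\<dots> = real (card (?N w)) * (x w k - mean d E \<epsilon> x w k)"
        using c0 by (simp add: mean_def right_diff_distrib)
      finally show "(\<Sum>u\<in>?N w. x w k - x u k) * ek k = (real (card (?N w)) * (x w k - mean d E \<epsilon> x w k)) * ek k"
        by simp
    qed
    finally show ?thesis .
  qed
  have Gsq: "(G w)^2 \<le> (real (card (?N w)))^2 * sqd d (mean d E \<epsilon> x w) (x w) * D2" for w
  proof -
    have "(G w)^2 \<le> (\<Sum>k<d. (real (card (?N w)) * (x w k - mean d E \<epsilon> x w k))^2) * (\<Sum>k<d. (ek k)^2)"
      unfolding Gform by (rule Cauchy_Schwarz_ineq_sum)
    also have "(\<Sum>k<d. (ek k)^2) = D2" by (simp add: D2_def sqd_def ek_def)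
    also have "(\<Sum>k<d. (real (card (?N w)) * (x w k - mean d E \<epsilon> x w k))^2)
        = (real (card (?N w)))^2 * sqd d (mean d E \<epsilon> x w) (x w)"
      by (simp add: sqd_def power_mult_distrib sum_distrib_left power2_commute)
    finally show ?thesis .
  qed
  have G0: "G w = 0" if "w \<in> {..<n} - ?W" for w
  proof -
    have "A w = {}" using that by (auto simp: A_def)
    then show ?thesis by (simp add: G_def)
  qed
  have sumW: "(\<Sum>w\<in>{..<n}. \<bar>G w\<bar>) = (\<Sum>w\<in>?W. \<bar>G w\<bar>)"
    by (rule sum.mono_neutral_right) (use G0 in auto)
  have cs: "(\<Sum>w\<in>?W. \<bar>G w\<bar>)^2 \<le> (\<Sum>w\<in>?W. real (card (?N w))) * (\<Sum>w\<in>?W. \<bar>G w\<bar>^2 / real (card (?N w)))"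
    by (rule wcs) (use nb_card_pos in auto)
  have s1: "(\<Sum>w\<in>?W. real (card (?N w))) \<le> 4 * real (card E)"
    using deg_bound[of d \<epsilon> x] by (simp flip: of_nat_sum)
  have Snn: "Ssum \<ge> 0" unfolding Ssum_def by (auto intro!: sum_nonneg mult_nonneg_nonneg sqd_nonneg)
  have s2: "(\<Sum>w\<in>?W. \<bar>G w\<bar>^2 / real (card (?N w))) \<le> D2 * Ssum"
  proof -
    have "(\<Sum>w\<in>?W. \<bar>G w\<bar>^2 / real (card (?N w)))
        \<le> (\<Sum>w\<in>?W. D2 * (real (card (?N w)) * sqd d (mean d E \<epsilon> x w) (x w)))"
    proof (rule sum_mono)
      fix w
      have c0: "real (card (?N w)) > 0" using nb_card_pos[of d \<epsilon> x w] by simp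
      have "\<bar>G w\<bar>^2 / real (card (?N w)) \<le> (real (card (?N w)))^2 * sqd d (mean d E \<epsilon> x w) (x w) * D2 / real (card (?N w))"
        using Gsq[of w] c0 by (simp add: divide_right_mono)
      also have "\<dots> = D2 * (real (card (?N w)) * sqd d (mean d E \<epsilon> x w) (x w))"
        using c0 by (simp add: power2_eq_square field_simps)
      finally show "\<bar>G w\<bar>^2 / real (card (?N w)) \<le> D2 * (real (card (?N w)) * sqd d (mean d E \<epsilon> x w) (x w))" .
    qed
    also have "\<dots> \<le> (\<Sum>w<n. D2 * (real (card (?N w)) * sqd d (mean d E \<epsilon> x w) (x w)))"
      by (rule sum_mono2) (use D2pos in \<open>auto intro!: mult_nonneg_nonneg sqd_nonneg\<close>)
    also have "\<dots> = D2 * Ssum" by (simp add: Ssum_def sum_distrib_left)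
    finally show ?thesis .
  qed
  have "D2^2 \<le> (\<Sum>w\<in>?W. \<bar>G w\<bar>)^2"
    using thr fdiff sumW D2pos by (intro power_mono) auto
  also have "\<dots> \<le> (4 * real (card E)) * (D2 * Ssum)"
    using cs s1 s2 by (meson order_trans mult_mono sum_nonneg divide_nonneg_nonneg zero_le_power2 abs_ge_zero of_nat_0_le_iff le_less_trans)
  finally have "D2 * D2 \<le> D2 * (4 * real (card E) * Ssum)" by (simp add: power2_eq_square mult_ac)
  then have "D2 \<le> 4 * real (card E) * Ssum" using D2pos by simp
  then show ?thesis using cE dD unfolding Ssum_def by simp
qed

lemma drift_ctx:
  assumes e: "\<epsilon> > 0" and dl: "\<delta> > 0" and ns: "\<not> delta_stable d E \<epsilon> \<delta> x"
  shows "card E > 0 \<and> (\<Sum>v<n. potential d E \<epsilon> (hk_update d E \<epsilon> x v))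
           \<le> real n * potential d E \<epsilon> x - \<delta>^2 / (4 * real (card E))"
proof -
  define Ssum where "Ssum = (\<Sum>w<n. real (card (infl_nbhd d E \<epsilon> x w)) * sqd d (mean d E \<epsilon> x w) (x w))"
  have k: "card E > 0" "\<delta>^2 \<le> 4 * real (card E) * Ssum" using key[OF e dl ns] by (auto simp: Ssum_def)
  have "(\<Sum>v<n. potential d E \<epsilon> (hk_update d E \<epsilon> x v))
      \<le> (\<Sum>v<n. potential d E \<epsilon> x - real (card (infl_nbhd d E \<epsilon> x v)) * sqd d (mean d E \<epsilon> x v) (x v))"
    by (rule sum_mono) (rule drop[OF e])
  also have "\<dots> = real n * potential d E \<epsilon> x - Ssum" by (simp add: sum_subtractf Ssum_def)
  also have "\<dots> \<le> real n * potential d E \<epsilon> x - \<delta>^2 / (4 * real (card E))"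
    using k by (simp add: divide_le_eq mult_ac)
  finally show ?thesis using k by simp
qed

end



lemma drift:
  assumes "simple_graph n E" "\<epsilon> > 0" "\<delta> > 0" "\<not> delta_stable d E \<epsilon> \<delta> x"
  shows "card E > 0 \<and> (\<Sum>v<n. potential d E \<epsilon> (hk_update d E \<epsilon> x v))
           \<le> real n * potential d E \<epsilon> x - \<delta>^2 / (4 * real (card E))"
  using drift_ctx[OF assms] .

lemma potential_nonneg: "potential d E \<epsilon> x \<ge> 0"
  unfolding potential_def by (auto intro!: sum_nonneg)

lemma traj_Cons:
  "hk_traj d E \<epsilon> x (v ## \<omega>) (Suc t) = hk_traj d E \<epsilon> (hk_update d E \<epsilon> x v) \<omega> t"
  by (induction t) auto

lemma conv_Cons:
  "conv_time d E \<epsilon> \<delta> x (v ## \<omega>) =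
     (if delta_stable d E \<epsilon> \<delta> x then 0 else 1 + conv_time d E \<epsilon> \<delta> (hk_update d E \<epsilon> x v) \<omega>)"
proof (cases "delta_stable d E \<epsilon> \<delta> x")
  case True
  then have "\<exists>t. delta_stable d E \<epsilon> \<delta> (hk_traj d E \<epsilon> x (v ## \<omega>) t)"
    by (metis hk_traj.simps(1))
  moreover have "(LEAST t. delta_stable d E \<epsilon> \<delta> (hk_traj d E \<epsilon> x (v ## \<omega>) t)) = 0"
    using True by (intro Least_equality) auto
  ultimately show ?thesis using True by (simp add: conv_time_def)
next
  case False
  let ?P = "\<lambda>t. delta_stable d E \<epsilon> \<delta> (hk_traj d E \<epsilon> x (v ## \<omega>) t)"
  let ?Q = "\<lambda>t. delta_stable d E \<epsilon> \<delta> (hk_traj d E \<epsilon> (hk_update d E \<epsilon> x v) \<omega> t)"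
  have PQ: "?P (Suc t) = ?Q t" for t by (simp only: traj_Cons)
  have P0: "\<not> ?P 0" using False by simp
  show ?thesis
  proof (cases "\<exists>t. ?Q t")
    case True
    then obtain t where "?Q t" by blast
    then have "?P (Suc t)" using PQ by simp
    then have "(LEAST t. ?P t) = Suc (LEAST t. ?P (Suc t))" using P0 by (rule Least_Suc)
    also have "(LEAST t. ?P (Suc t)) = (LEAST t. ?Q t)" using PQ by simp
    finally have "(LEAST t. ?P t) = Suc (LEAST t. ?Q t)" .
    moreover have "\<exists>t. ?P t" using \<open>?P (Suc t)\<close> by blast
    ultimately show ?thesis using False True by (simp add: conv_time_def)
  next
    case nQ: False
    have "\<not> (\<exists>t. ?P t)"
    proof
      assume "\<exists>t. ?P t"
      then obtain t where "?P t" by blast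
      then show False using P0 nQ PQ by (cases t) auto
    qed
    then show ?thesis using False nQ by (simp add: conv_time_def)
  qed
qed

primrec trc :: "nat \<Rightarrow> nat \<Rightarrow> nat set set \<Rightarrow> real \<Rightarrow> real \<Rightarrow> (nat \<Rightarrow> nat \<Rightarrow> real) \<Rightarrow> nat stream \<Rightarrow> ennreal" where
  "trc 0 d E \<epsilon> \<delta> x \<omega> = 0"
| "trc (Suc N) d E \<epsilon> \<delta> x \<omega> = (if delta_stable d E \<epsilon> \<delta> x then 0
      else 1 + trc N d E \<epsilon> \<delta> (hk_update d E \<epsilon> x (shd \<omega>)) (stl \<omega>))"

lemma min1: "1 + min (a::ennreal) b = min (1 + a) (1 + b)"
  by (simp add: min_def ennreal_add_left_cancel_le)

lemma trc_min: "trc N d E \<epsilon> \<delta> x \<omega> = min (conv_time d E \<epsilon> \<delta> x \<omega>) (of_nat N)"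
proof (induction N arbitrary: x \<omega>)
  case 0
  then show ?case by simp
next
  case (Suc N)
  have "conv_time d E \<epsilon> \<delta> x \<omega> = conv_time d E \<epsilon> \<delta> x (shd \<omega> ## stl \<omega>)" by simp
  also have "\<dots> = (if delta_stable d E \<epsilon> \<delta> x then 0 else 1 + conv_time d E \<epsilon> \<delta> (hk_update d E \<epsilon> x (shd \<omega>)) (stl \<omega>))"
    by (rule conv_Cons)
  finally show ?case using Suc
    by (simp add: min1)
qed

lemma conv_SUP: "conv_time d E \<epsilon> \<delta> x \<omega> = (SUP N. trc N d E \<epsilon> \<delta> x \<omega>)"
proof -
  let ?c = "conv_time d E \<epsilon> \<delta> x \<omega>"
  have le: "(SUP N. trc N d E \<epsilon> \<delta> x \<omega>) \<le> ?c"
    by (rule SUP_least) (simp add: trc_min)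
  have "?c \<le> (SUP N. trc N d E \<epsilon> \<delta> x \<omega>)"
  proof (cases "?c = \<infinity>")
    case True
    have "(SUP N. (of_nat N :: ennreal)) \<le> (SUP N. trc N d E \<epsilon> \<delta> x \<omega>)"
      by (rule SUP_mono) (auto simp: trc_min True)
    then show ?thesis using True ennreal_SUP_of_nat_eq_top by (simp add: top_unique)
  next
    case False
    then have "?c = of_nat (LEAST t. delta_stable d E \<epsilon> \<delta> (hk_traj d E \<epsilon> x \<omega> t))"
      unfolding conv_time_def by (auto split: if_splits)
    then obtain k where k: "?c = of_nat k" by blast
    have "?c = trc k d E \<epsilon> \<delta> x \<omega>" by (simp add: trc_min k)
    also have "\<dots> \<le> (SUP N. trc N d E \<epsilon> \<delta> x \<omega>)" by (rule SUP_upper) simp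
    finally show ?thesis .
  qed
  with le show ?thesis by (rule antisym[rotated])
qed

lemma shd_meas: "shd \<in> measurable (stream_space (measure_pmf p)) (count_space UNIV)"
proof -
  have "shd \<in> measurable (stream_space (measure_pmf p)) (measure_pmf p)" by (rule measurable_shd)
  moreover have "measurable (stream_space (measure_pmf p)) (measure_pmf p) =
      measurable (stream_space (measure_pmf p)) (count_space UNIV)"
    by (rule measurable_cong_sets) auto
  ultimately show ?thesis by simp
qed

lemma trc_meas: "trc N d E \<epsilon> \<delta> x \<in> borel_measurable (stream_space (measure_pmf p))"
proof (induction N arbitrary: x)
  case 0
  then show ?case by simp
next
  case (Suc N)
  have "(\<lambda>\<omega>. (\<lambda>v \<omega>. 1 + trc N d E \<epsilon> \<delta> (hk_update d E \<epsilon> x v) (stl \<omega>)) (shd \<omega>) \<omega>)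
     \<in> borel_measurable (stream_space (measure_pmf p))"
  proof (rule measurable_compose_countable'[OF _ shd_meas])
    fix v :: nat
    have "(\<lambda>\<omega>. trc N d E \<epsilon> \<delta> (hk_update d E \<epsilon> x v) (stl \<omega>)) \<in> borel_measurable (stream_space (measure_pmf p))"
      using measurable_compose[OF measurable_stl Suc.IH] by simp
    then show "(\<lambda>\<omega>. 1 + trc N d E \<epsilon> \<delta> (hk_update d E \<epsilon> x v) (stl \<omega>)) \<in> borel_measurable (stream_space (measure_pmf p))"
      by simp
  qed simp
  then show ?case by simp
qed

lemma trc_bound:
  assumes sg: "simple_graph n E" and e: "\<epsilon> > 0" and dl: "\<delta> > 0" and n: "n > 0"
  shows "(\<integral>\<^sup>+\<omega>. trc N d E \<epsilon> \<delta> x \<omega> \<partial>agent_choices n)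
          \<le> ennreal (4 * potential d E \<epsilon> x * real n * real (card E) / \<delta>^2)"
proof (induction N arbitrary: x)
  case 0
  then show ?case by simp
next
  case (Suc N)
  let ?M = "measure_pmf (pmf_of_set {..<n})"
  let ?S = "stream_space ?M"
  interpret S: prob_space ?S by (rule prob_space.prob_space_stream_space[OF prob_space_measure_pmf])
  show ?case
  proof (cases "delta_stable d E \<epsilon> \<delta> x")
    case True
    then show ?thesis by (simp add: agent_choices_def)
  next
    case False
    let ?K = "4 * real n * real (card E) / \<delta>^2"
    let ?I = "\<lambda>y. \<integral>\<^sup>+\<omega>. trc N d E \<epsilon> \<delta> y \<omega> \<partial>?S"
    have "(\<integral>\<^sup>+\<omega>. trc (Suc N) d E \<epsilon> \<delta> x \<omega> \<partial>?S)
        = (\<integral>\<^sup>+v. (\<integral>\<^sup>+\<omega>. trc (Suc N) d E \<epsilon> \<delta> x (v ## \<omega>) \<partial>?S) \<partial>?M)"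
      by (rule prob_space.nn_integral_stream_space[OF prob_space_measure_pmf]) (rule trc_meas)
    also have "\<dots> = (\<integral>\<^sup>+v. (\<integral>\<^sup>+\<omega>. 1 + trc N d E \<epsilon> \<delta> (hk_update d E \<epsilon> x v) \<omega> \<partial>?S) \<partial>?M)"
      using False by simp
    also have "\<dots> = (\<integral>\<^sup>+v. 1 + ?I (hk_update d E \<epsilon> x v) \<partial>?M)"
      by (subst nn_integral_add) (auto simp: trc_meas S.emeasure_space_1)
    also have "\<dots> = (\<Sum>v<n. 1 + ?I (hk_update d E \<epsilon> x v)) / of_nat n"
      using n by (subst nn_integral_pmf_of_set) auto
    also have "\<dots> \<le> (\<Sum>v<n. ennreal (1 + ?K * potential d E \<epsilon> (hk_update d E \<epsilon> x v))) / of_nat n"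
    proof (intro divide_right_mono_ennreal sum_mono)
      fix v
      have "?I (hk_update d E \<epsilon> x v) \<le> ennreal (?K * potential d E \<epsilon> (hk_update d E \<epsilon> x v))"
        using Suc.IH[of "hk_update d E \<epsilon> x v"] by (simp add: agent_choices_def mult_ac)
      then show "1 + ?I (hk_update d E \<epsilon> x v) \<le> ennreal (1 + ?K * potential d E \<epsilon> (hk_update d E \<epsilon> x v))"
        using potential_nonneg[of d E \<epsilon>] dl
        by (subst ennreal_plus) (auto intro!: add_left_mono)
    qed
    also have "\<dots> = ennreal ((\<Sum>v<n. 1 + ?K * potential d E \<epsilon> (hk_update d E \<epsilon> x v)) / real n)"
    proof -
      have nn: "0 \<le> 1 + ?K * potential d E \<epsilon> (hk_update d E \<epsilon> x v)" for v
        using potential_nonneg[of d E \<epsilon>] dl by (auto intro!: add_nonneg_nonneg mult_nonneg_nonneg)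
      have "(\<Sum>v<n. ennreal (1 + ?K * potential d E \<epsilon> (hk_update d E \<epsilon> x v)))
         = ennreal (\<Sum>v<n. 1 + ?K * potential d E \<epsilon> (hk_update d E \<epsilon> x v))"
        using nn by (simp add: sum_ennreal)
      moreover have "0 \<le> (\<Sum>v<n. 1 + ?K * potential d E \<epsilon> (hk_update d E \<epsilon> x v))"
        using nn by (simp add: sum_nonneg)
      ultimately show ?thesis using n
        by (simp add: divide_ennreal ennreal_of_nat_eq_real_of_nat)
    qed
    also have "\<dots> \<le> ennreal (?K * potential d E \<epsilon> x)"
    proof (rule ennreal_leI)
      have cE: "card E > 0" and dr: "(\<Sum>v<n. potential d E \<epsilon> (hk_update d E \<epsilon> x v))
           \<le> real n * potential d E \<epsilon> x - \<delta>^2 / (4 * real (card E))"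
        using drift[OF sg e dl False] by blast+
      have "(\<Sum>v<n. 1 + ?K * potential d E \<epsilon> (hk_update d E \<epsilon> x v)) = real n + ?K * (\<Sum>v<n. potential d E \<epsilon> (hk_update d E \<epsilon> x v))"
        by (simp add: sum.distrib sum_distrib_left)
      also have "\<dots> \<le> real n + ?K * (real n * potential d E \<epsilon> x - \<delta>^2 / (4 * real (card E)))"
        using dr dl by (intro add_left_mono mult_left_mono) auto
      also have "\<dots> = real n * (?K * potential d E \<epsilon> x)"
        using cE dl by (simp add: field_simps)
      finally show "(\<Sum>v<n. 1 + ?K * potential d E \<epsilon> (hk_update d E \<epsilon> x v)) / real n \<le> ?K * potential d E \<epsilon> x"
        using n by (simp add: field_simps)
    qed
    finally show ?thesis by (simp add: agent_choices_def mult_ac)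
  qed
qed

lemma potential_le: "potential d E \<epsilon> x \<le> real (card E) * \<epsilon>^2"
  unfolding potential_def using sum_bounded_above[of E "\<lambda>e. min ((edge_len d x e)^2) (\<epsilon>^2)" "\<epsilon>^2"]
  by auto

lemma exp_bound:
  assumes sg: "simple_graph n E" and e: "\<epsilon> > 0" and dl: "\<delta> > 0" and n: "n > 0"
  shows "expected_conv_time n d E \<epsilon> \<delta> x
          \<le> ennreal (4 * potential d E \<epsilon> x * real n * real (card E) / \<delta>^2)"
proof -
  have inc: "incseq (\<lambda>N \<omega>. trc N d E \<epsilon> \<delta> x \<omega>)"
    unfolding incseq_def le_fun_def trc_min by (auto intro: min.coboundedI2)
  have "expected_conv_time n d E \<epsilon> \<delta> x = (\<integral>\<^sup>+\<omega>. (SUP N. trc N d E \<epsilon> \<delta> x \<omega>) \<partial>agent_choices n)"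
    unfolding expected_conv_time_def by (intro nn_integral_cong) (rule conv_SUP)
  also have "\<dots> = (SUP N. (\<integral>\<^sup>+\<omega>. trc N d E \<epsilon> \<delta> x \<omega> \<partial>agent_choices n))"
    by (rule nn_integral_monotone_convergence_SUP[OF inc]) (simp add: agent_choices_def trc_meas)
  also have "\<dots> \<le> ennreal (4 * potential d E \<epsilon> x * real n * real (card E) / \<delta>^2)"
    by (rule SUP_least) (rule trc_bound[OF sg e dl n])
  finally show ?thesis .
qed

theorem theorem1:
  shows "\<exists>C>0. \<forall>(n::nat) (d::nat) (E::nat set set) (\<epsilon>::real) (\<delta>::real) (x0::nat \<Rightarrow> nat \<Rightarrow> real).
     n > 0 \<and> simple_graph n E \<and> \<epsilon> > 0 \<and> \<delta> > 0 \<longrightarrow>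
       expected_conv_time n d E \<epsilon> \<delta> x0
         \<le> ennreal (C * potential d E \<epsilon> x0 * real n * real (card E) / \<delta>^2)
     \<and> expected_conv_time n d E \<epsilon> \<delta> x0
         \<le> ennreal (C * real n * real (card E)^2 * (\<epsilon> / \<delta>)^2)"
proof (intro exI[of _ 4] conjI allI impI)
  fix n d :: nat and E :: "nat set set" and \<epsilon> \<delta> :: real and x0 :: "nat \<Rightarrow> nat \<Rightarrow> real"
  assume a: "n > 0 \<and> simple_graph n E \<and> \<epsilon> > 0 \<and> (\<delta>::real) > 0"
  then have b: "expected_conv_time n d E \<epsilon> \<delta> x0
          \<le> ennreal (4 * potential d E \<epsilon> x0 * real n * real (card E) / \<delta>^2)"
    using exp_bound by blast
  then show "expected_conv_time n d E \<epsilon> \<delta> x0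
          \<le> ennreal (4 * potential d E \<epsilon> x0 * real n * real (card E) / \<delta>^2)" .
  have "4 * potential d E \<epsilon> x0 * real n * real (card E) / \<delta>^2
      \<le> 4 * (real (card E) * \<epsilon>^2) * real n * real (card E) / \<delta>^2"
    using potential_le[of d E \<epsilon> x0] a
    by (intro divide_right_mono mult_right_mono mult_left_mono) auto
  also have "\<dots> = 4 * real n * real (card E)^2 * (\<epsilon> / \<delta>)^2"
    by (simp add: power2_eq_square field_simps)
  finally show "expected_conv_time n d E \<epsilon> \<delta> x0
         \<le> ennreal (4 * real n * real (card E)^2 * (\<epsilon> / \<delta>)^2)"
    using b by (meson ennreal_leI order_trans)
qed simp

end
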